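(* Let $$S(t,p,q,x,y,u,v)=\sum_{\pi}t^{|\pi|}p^{\mathrm{asc}(\pi)}q^{\mathrm{des}(\pi)}x^{\mathrm{lmax}(\pi)}y^{\mathrm{rmax}(\pi)}u^{\mathrm{lmin}(\pi)}v^{\mathrm{rmin}(\pi)},$$ the sum over all separable permutations $\pi$, and let $I(t,p,q,x,y,u,v)$ be the same sum restricted to irreducible separable permutations. Then, as formal power series, $$S(t,p,q,x,y,u,v)=xyuvt+p\,S(t,p,q,x,1,u,v)\,I(t,p,q,x,y,1,v)+q\bigl(S(t,p,q,x,y,u,1)-I(t,p,q,x,y,u,1)+xyut\bigr)S(t,p,q,1,y,u,v)$$ and $$I(t,p,q,x,y,u,v)=xyuvt+q\bigl(S(t,p,q,x,y,u,1)-I(t,p,q,x,y,u,1)+xyut\bigr)S(t,p,q,1,y,u,v).$$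
   Context: A permutation of length $n$ is a word $\pi=\pi_1\cdots\pi_n$ containing each element of $[n]$ exactly once; $|\pi|=n$. For $\pi$ of length $m$ and $\sigma$ of length $n$, $\pi\oplus\sigma=\pi_1\cdots\pi_m(\sigma_1+m)\cdots(\sigma_n+m)$ and $\pi\ominus\sigma=(\pi_1+n)\cdots(\pi_m+n)\sigma_1\cdots\sigma_n$. Separable permutations are the permutations of length $\ge1$ obtained from the permutation $1$ by repeatedly applying $\oplus$ and $\ominus$ (equivalently, those avoiding the patterns $2413$ and $3142$); the empty permutation is not separable. The permutation $1$ is irreducible; a permutation of length $n\ge2$ is irreducible if there is no $i$ with $2\le i\le n$ such that every element of $\pi_1\cdots\pi_{i-1}$ is less than every element of $\pi_i\cdots\pi_n$. Statistics: $\mathrm{asc}(\pi)=\#\{i<n:\pi_i<\pi_{i+1}\}$, $\mathrm{des}(\pi)=\#\{i<n:\pi_i>\pi_{i+1}\}$; $\pi_i$ is a left-to-right maximum (minimum) if $\pi_i>\pi_j$ ($\pi_i<\pi_j$) for all $j<i$, and a right-to-left maximum (minimum) if $\pi_i>\pi_j$ ($\pi_i<\pi_j$) for all $j>i$; $\mathrm{lmax},\mathrm{lmin},\mathrm{rmax},\mathrm{rmin}$ count these. *)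

theory Defs
  imports "HOL-Computational_Algebra.Formal_Power_Series"
begin

definition perms :: "nat \<Rightarrow> nat list set" where
  "perms n = {xs. distinct xs \<and> set xs = {1..n}}"

definition psum :: "nat list \<Rightarrow> nat list \<Rightarrow> nat list" where
  "psum a b = a @ map (\<lambda>j. j + length a) b"

definition pskew :: "nat list \<Rightarrow> nat list \<Rightarrow> nat list" where
  "pskew a b = map (\<lambda>j. j + length b) a @ b"

inductive separable :: "nat list \<Rightarrow> bool" where
  one: "separable [1]"
| dsum: "separable a \<Longrightarrow> separable b \<Longrightarrow> separable (psum a b)"
| skew: "separable a \<Longrightarrow> separable b \<Longrightarrow> separable (pskew a b)"

definition irreducible_perm :: "nat list \<Rightarrow> bool" where
  "irreducible_perm \<pi> \<longleftrightarrow> \<pi> = [1] \<or>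
     (length \<pi> \<ge> 2 \<and> \<not> (\<exists>i. 2 \<le> i \<and> i \<le> length \<pi> \<and>
        (\<forall>a\<in>set (take (i - 1) \<pi>). \<forall>b\<in>set (drop (i - 1) \<pi>). a < b)))"

definition asc :: "nat list \<Rightarrow> nat" where
  "asc \<pi> = card {i. Suc i < length \<pi> \<and> \<pi> ! i < \<pi> ! Suc i}"

definition des :: "nat list \<Rightarrow> nat" where
  "des \<pi> = card {i. Suc i < length \<pi> \<and> \<pi> ! i > \<pi> ! Suc i}"

definition lmax :: "nat list \<Rightarrow> nat" where
  "lmax \<pi> = card {i. i < length \<pi> \<and> (\<forall>j<i. \<pi> ! i > \<pi> ! j)}"

definition lmin :: "nat list \<Rightarrow> nat" where
  "lmin \<pi> = card {i. i < length \<pi> \<and> (\<forall>j<i. \<pi> ! i < \<pi> ! j)}"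

definition rmax :: "nat list \<Rightarrow> nat" where
  "rmax \<pi> = card {i. i < length \<pi> \<and> (\<forall>j. i < j \<and> j < length \<pi> \<longrightarrow> \<pi> ! i > \<pi> ! j)}"

definition rmin :: "nat list \<Rightarrow> nat" where
  "rmin \<pi> = card {i. i < length \<pi> \<and> (\<forall>j. i < j \<and> j < length \<pi> \<longrightarrow> \<pi> ! i < \<pi> ! j)}"

definition wt :: "'a::comm_ring_1 \<Rightarrow> 'a \<Rightarrow> 'a \<Rightarrow> 'a \<Rightarrow> 'a \<Rightarrow> 'a \<Rightarrow> nat list \<Rightarrow> 'a" where
  "wt p q x y u v \<pi> = p ^ asc \<pi> * q ^ des \<pi> * x ^ lmax \<pi> * y ^ rmax \<pi> * u ^ lmin \<pi> * v ^ rmin \<pi>"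

definition Sgf :: "'a::comm_ring_1 \<Rightarrow> 'a \<Rightarrow> 'a \<Rightarrow> 'a \<Rightarrow> 'a \<Rightarrow> 'a \<Rightarrow> 'a fps" where
  "Sgf p q x y u v = Abs_fps (\<lambda>n. \<Sum>\<pi>\<in>{\<pi>\<in>perms n. separable \<pi>}. wt p q x y u v \<pi>)"

definition Igf :: "'a::comm_ring_1 \<Rightarrow> 'a \<Rightarrow> 'a \<Rightarrow> 'a \<Rightarrow> 'a \<Rightarrow> 'a \<Rightarrow> 'a fps" where
  "Igf p q x y u v = Abs_fps (\<lambda>n. \<Sum>\<pi>\<in>{\<pi>\<in>perms n. separable \<pi> \<and> irreducible_perm \<pi>}. wt p q x y u v \<pi>)"

end

theory Submission
  imports Defs
begin

lemma perms_length: "xs \<in> perms n \<Longrightarrow> length xs = n"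
  unfolding perms_def using distinct_card by fastforce

lemma perms_bounds: "xs \<in> perms n \<Longrightarrow> z \<in> set xs \<Longrightarrow> 1 \<le> z \<and> z \<le> n"
  unfolding perms_def by auto

lemma finite_perms: "finite (perms n)"
proof -
  have "perms n \<subseteq> {xs. set xs \<subseteq> {1..n} \<and> length xs = n}"
    using perms_length unfolding perms_def by auto
  moreover have "finite {xs. set xs \<subseteq> {1..n} \<and> length xs = n}"
    by (rule finite_lists_length_eq) simp
  ultimately show ?thesis by (rule finite_subset)
qed

lemma perms_0: "perms 0 = {[]}" unfolding perms_def by auto

lemma perms_1: "perms 1 = {[1]}"
proof
  show "perms 1 \<subseteq> {[1]}"
  proof
    fix xs assume a: "xs \<in> perms 1"
    then have "length xs = 1" by (rule perms_length)
    then obtain z where "xs = [z]" by (cases xs) auto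
    with a show "xs \<in> {[1]}" unfolding perms_def by auto
  qed
qed (auto simp: perms_def)

lemma perms_1': "perms (Suc 0) = {[Suc 0]}" using perms_1 by simp

lemma psum_perms:
  assumes "a \<in> perms m" "b \<in> perms n" shows "psum a b \<in> perms (m + n)"
proof -
  have la: "length a = m" using assms(1) by (rule perms_length)
  have "set (map (\<lambda>j. j + m) b) = {m+1..m+n}"
    using assms(2) unfolding perms_def
    by (auto simp: image_iff intro!: bexI[where x="_ - m"])
  moreover have "distinct (map (\<lambda>j. j + m) b)"
    using assms(2) unfolding perms_def by (simp add: distinct_map inj_on_def)
  ultimately show ?thesis using assms(1) la unfolding perms_def psum_def by auto
qed

lemma pskew_perms:
  assumes "a \<in> perms m" "b \<in> perms n" shows "pskew a b \<in> perms (m + n)"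
proof -
  have lb: "length b = n" using assms(2) by (rule perms_length)
  have "set (map (\<lambda>j. j + n) a) = {n+1..m+n}"
    using assms(1) unfolding perms_def
    by (auto simp: image_iff intro!: bexI[where x="_ - n"])
  moreover have "distinct (map (\<lambda>j. j + n) a)"
    using assms(1) unfolding perms_def by (simp add: distinct_map inj_on_def)
  ultimately show ?thesis using assms(2) lb unfolding perms_def pskew_def by auto
qed

lemma separable_perm: "separable \<pi> \<Longrightarrow> \<pi> \<in> perms (length \<pi>) \<and> \<pi> \<noteq> []"
proof (induction rule: separable.induct)
  case one then show ?case by (simp add: perms_def)
next
  case (dsum a b) then show ?case using psum_perms[of a "length a" b "length b"]
    by (simp add: psum_def)
next
  case (skew a b) then show ?case using pskew_perms[of a "length a" b "length b"]
    by (simp add: pskew_def)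
qed

lemma psum_assoc: "psum (psum a c) d = psum a (psum c d)"
  unfolding psum_def by (simp add: add.assoc)

lemma pskew_assoc: "pskew (pskew c d) b = pskew c (pskew d b)"
  unfolding pskew_def by (simp add: add.assoc)

lemma hd_gt_last_irr:
  assumes "length \<pi> \<ge> 2" "hd \<pi> > last \<pi>" shows "irreducible_perm \<pi>"
  unfolding irreducible_perm_def
proof (intro disjI2 conjI notI)
  show "length \<pi> \<ge> 2" by fact
  assume "\<exists>i\<ge>2. i \<le> length \<pi> \<and> (\<forall>a\<in>set (take (i - 1) \<pi>). \<forall>b\<in>set (drop (i - 1) \<pi>). a < b)"
  then obtain i where i: "2 \<le> i" "i \<le> length \<pi>"
    and h: "\<forall>a\<in>set (take (i - 1) \<pi>). \<forall>b\<in>set (drop (i - 1) \<pi>). a < b" by blast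
  have "hd \<pi> \<in> set (take (i - 1) \<pi>)" using i
    by (metis One_nat_def Suc_1 diff_is_0_eq hd_in_set hd_take le_add_diff_inverse2 list.size(3)
        not_one_le_zero plus_1_eq_Suc take_eq_Nil2 zero_less_diff Suc_le_lessD less_imp_le_nat)
  moreover have "last \<pi> \<in> set (drop (i - 1) \<pi>)" using i
    by (metis One_nat_def diff_less drop_eq_Nil last_drop last_in_set leD less_le_trans pos2 zero_less_one)
  ultimately show False using h assms(2) by fastforce
qed

lemma pskew_irr:
  assumes "a \<in> perms m" "b \<in> perms n" "a \<noteq> []" "b \<noteq> []"
  shows "irreducible_perm (pskew a b)"
proof (rule hd_gt_last_irr)
  have "length a \<ge> 1" "length b \<ge> 1" using assms by (auto simp: Suc_le_eq)
  then show "length (pskew a b) \<ge> 2" by (simp add: pskew_def)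
  have "hd a \<ge> 1" using perms_bounds[OF assms(1) hd_in_set[OF assms(3)]] by simp
  moreover have "last b \<le> n" using perms_bounds[OF assms(2) last_in_set[OF assms(4)]] by simp
  moreover have "length b = n" using assms(2) by (rule perms_length)
  ultimately show "hd (pskew a b) > last (pskew a b)" using assms(3,4)
    by (simp add: pskew_def hd_map)
qed

lemma psum_red:
  assumes "a \<in> perms m" "b \<in> perms n" "a \<noteq> []" "b \<noteq> []"
  shows "\<not> irreducible_perm (psum a b)"
proof -
  have la: "length a = m" using assms(1) by (rule perms_length)
  have "length a \<ge> 1" "length b \<ge> 1" using assms by (auto simp: Suc_le_eq)
  then have len: "length (psum a b) \<ge> 2" by (simp add: psum_def)
  have "take (m + 1 - 1) (psum a b) = a" "drop (m + 1 - 1) (psum a b) = map (\<lambda>j. j + m) b"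
    using la by (auto simp: psum_def)
  moreover have "\<forall>x\<in>set a. \<forall>y\<in>set (map (\<lambda>j. j + m) b). x < y"
    using perms_bounds[OF assms(1)] perms_bounds[OF assms(2)] by fastforce
  moreover have "2 \<le> m + 1" "m + 1 \<le> length (psum a b)" using `length a \<ge> 1` `length b \<ge> 1` la
    by (auto simp: psum_def)
  ultimately have "\<exists>i. 2 \<le> i \<and> i \<le> length (psum a b) \<and>
        (\<forall>x\<in>set (take (i - 1) (psum a b)). \<forall>y\<in>set (drop (i - 1) (psum a b)). x < y)"
    by metis
  moreover have "psum a b \<noteq> [1]" using len by auto
  ultimately show ?thesis unfolding irreducible_perm_def by blast
qed


lemma sep_len2: "separable b \<Longrightarrow> b \<noteq> [1] \<Longrightarrow> length b \<ge> 2"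
proof -
  assume s: "separable b" and n: "b \<noteq> [1]"
  from separable_perm[OF s] have p: "b \<in> perms (length b)" "b \<noteq> []" by auto
  show ?thesis
  proof (rule ccontr)
    assume "\<not> length b \<ge> 2"
    moreover have "length b \<noteq> 0" using p by simp
    ultimately have "length b = 1" by linarith
    with p have "b \<in> perms 1" by simp
    with n show False using perms_1 by blast
  qed
qed

lemma sep_psum_red: "separable a \<Longrightarrow> separable b \<Longrightarrow> \<not> irreducible_perm (psum a b)"
  using separable_perm psum_red by blast

lemma sep_pskew_irr: "separable a \<Longrightarrow> separable b \<Longrightarrow> irreducible_perm (pskew a b)"
  using separable_perm pskew_irr by blast

lemma decomp:
  "separable \<pi> \<Longrightarrow> length \<pi> \<ge> 2 \<Longrightarrow>
    (\<exists>a b. separable a \<and> separable b \<and> irreducible_perm b \<and> \<pi> = psum a b) \<or>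
    (\<exists>a b. separable a \<and> separable b \<and> (a = [1] \<or> \<not> irreducible_perm a) \<and> \<pi> = pskew a b)"
proof (induction rule: separable.induct)
  case one then show ?case by simp
next
  case (dsum a b)
  show ?case
  proof (cases "irreducible_perm b")
    case True then show ?thesis using dsum by blast
  next
    case False
    then have "b \<noteq> [1]" unfolding irreducible_perm_def by auto
    then have "length b \<ge> 2" using sep_len2 dsum by blast
    from dsum.IH(2)[OF this] show ?thesis
    proof
      assume "\<exists>c d. separable c \<and> separable d \<and> irreducible_perm d \<and> b = psum c d"
      then obtain c d where "separable c" "separable d" "irreducible_perm d" "b = psum c d" by blast
      then show ?thesis using dsum psum_assoc separable.dsum by metis
    next
      assume "\<exists>c d. separable c \<and> separable d \<and> (c = [1] \<or> \<not> irreducible_perm c) \<and> b = pskew c d"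
      then obtain c d where "separable c" "separable d" "b = pskew c d" by blast
      then show ?thesis using False sep_pskew_irr by blast
    qed
  qed
next
  case (skew a b)
  show ?case
  proof (cases "a = [1] \<or> \<not> irreducible_perm a")
    case True then show ?thesis using skew by blast
  next
    case False
    then have "length a \<ge> 2" using sep_len2 skew by blast
    from skew.IH(1)[OF this] show ?thesis
    proof
      assume "\<exists>c d. separable c \<and> separable d \<and> irreducible_perm d \<and> a = psum c d"
      then obtain c d where "separable c" "separable d" "a = psum c d" by blast
      then show ?thesis using False sep_psum_red by blast
    next
      assume "\<exists>c d. separable c \<and> separable d \<and> (c = [1] \<or> \<not> irreducible_perm c) \<and> a = pskew c d"
      then obtain c d where "separable c" "separable d" "c = [1] \<or> \<not> irreducible_perm c" "a = pskew c d" by blast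
      then show ?thesis using skew pskew_assoc separable.skew by metis
    qed
  qed
qed


lemma red_intro:
  assumes "length b \<ge> 2" "1 \<le> m" "m < length b"
    "\<forall>x\<in>set (take m b). \<forall>y\<in>set (drop m b). x < y"
  shows "\<not> irreducible_perm b"
proof -
  have "\<exists>i. 2 \<le> i \<and> i \<le> length b \<and> (\<forall>x\<in>set (take (i - 1) b). \<forall>y\<in>set (drop (i - 1) b). x < y)"
    using assms by (intro exI[where x="m+1"]) auto
  moreover have "b \<noteq> [1]" using assms(1) by auto
  ultimately show ?thesis unfolding irreducible_perm_def by blast
qed

lemma psum_uniq_aux:
  assumes a: "a \<in> perms k" and a': "a' \<in> perms k'" and kk: "k < k'"
    and b': "b' \<in> perms n'" "b' \<noteq> []" and eq: "psum a b = psum a' b'"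
  shows "\<not> irreducible_perm b"
proof -
  have la: "length a = k" using a by (rule perms_length)
  have la': "length a' = k'" using a' by (rule perms_length)
  have e: "a @ map (\<lambda>j. j + k) b = a' @ map (\<lambda>j. j + k') b'"
    using eq la la' by (simp add: psum_def)
  have "drop k (a @ map (\<lambda>j. j + k) b) = drop k (a' @ map (\<lambda>j. j + k') b')" using e by simp
  then have e2: "map (\<lambda>j. j + k) b = drop k a' @ map (\<lambda>j. j + k') b'"
    using la la' kk by simp
  define m where "m = k' - k"
  have lm: "length (drop k a') = m" using la' m_def by simp
  have t: "map (\<lambda>j. j + k) (take m b) = drop k a'"
    using arg_cong[OF e2, of "take m"] lm by (simp add: take_map)
  have d: "map (\<lambda>j. j + k) (drop m b) = map (\<lambda>j. j + k') b'"
    using arg_cong[OF e2, of "drop m"] lm by (simp add: drop_map)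
  have lb: "length b = m + length b'" using arg_cong[OF e2, of length] lm by simp
  show ?thesis
  proof (rule red_intro[where m=m])
    show "length b \<ge> 2" "1 \<le> m" "m < length b" proof -
      have "length b' \<ge> 1" using b'(2) by (cases b') auto
      then show "length b \<ge> 2" "1 \<le> m" "m < length b" using lb kk m_def by auto
    qed
    show "\<forall>x\<in>set (take m b). \<forall>y\<in>set (drop m b). x < y"
    proof (intro ballI)
      fix x y assume x: "x \<in> set (take m b)" and y: "y \<in> set (drop m b)"
      have "x + k \<in> set (drop k a')" using x t[symmetric] by auto
      then have "x + k \<in> set a'" using in_set_dropD by fastforce
      then have "x + k \<le> k'" using perms_bounds[OF a'] by blast
      moreover have "y + k \<in> set (map (\<lambda>j. j + k') b')" using y d[symmetric] by auto
      then obtain z where "z \<in> set b'" "y + k = z + k'" by auto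
      then have "y + k > k'" using perms_bounds[OF b'(1)] by fastforce
      ultimately show "x < y" by simp
    qed
  qed
qed

lemma pskew_uniq_aux:
  assumes a: "a \<in> perms ka" and b: "b \<in> perms kb" and a': "a' \<in> perms ka'" and b': "b' \<in> perms kb'"
    and ne: "a \<noteq> []" and kk: "ka < ka'" and eq: "pskew a b = pskew a' b'"
  shows "irreducible_perm a'"
proof -
  have la: "length a = ka" using a by (rule perms_length)
  have la': "length a' = ka'" using a' by (rule perms_length)
  have lb: "length b = kb" using b by (rule perms_length)
  have lb': "length b' = kb'" using b' by (rule perms_length)
  have e: "map (\<lambda>j. j + kb) a @ b = map (\<lambda>j. j + kb') a' @ b'"
    using eq lb lb' by (simp add: pskew_def)
  have tot: "ka + kb = ka' + kb'" using arg_cong[OF e, of length] la la' lb lb' by simp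
  define m where "m = ka' - ka"
  have "take ka' (map (\<lambda>j. j + kb) a @ b) = take ka' (map (\<lambda>j. j + kb') a' @ b')" using e by simp
  then have e2: "map (\<lambda>j. j + kb') a' = map (\<lambda>j. j + kb) a @ take m b"
    using la la' kk m_def by simp
  have ne': "a' \<noteq> []" using la' kk by auto
  have "hd (map (\<lambda>j. j + kb') a') = hd (map (\<lambda>j. j + kb) a @ take m b)" using e2 by simp
  then have h: "hd a' + kb' = hd a + kb" using ne ne' by (simp add: hd_map)
  have tm: "take m b \<noteq> []" using m_def kk tot lb by auto
  have "last (map (\<lambda>j. j + kb') a') = last (map (\<lambda>j. j + kb) a @ take m b)" using e2 by simp
  then have l: "last a' + kb' = last (take m b)" using tm ne' by (simp add: last_map)
  have "last (take m b) \<in> set b" using tm by (meson in_set_takeD last_in_set)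
  then have "last (take m b) \<le> kb" using perms_bounds[OF b] by blast
  moreover have "hd a \<ge> 1" using perms_bounds[OF a hd_in_set[OF ne]] by blast
  ultimately have "hd a' > last a'" using h l by linarith
  moreover have "length a' \<ge> 2" using la' kk ne la by (cases a) auto
  ultimately show ?thesis by (intro hd_gt_last_irr)
qed


lemma card_split:
  fixes m n :: nat shows "card {i. i < m + n \<and> P i} = card {i. i < m \<and> P i} + card {j. j < n \<and> P (m + j)}"
proof -
  have e: "{i. i < m + n \<and> P i} = {i. i < m \<and> P i} \<union> (\<lambda>j. m + j) ` {j. j < n \<and> P (m + j)}"
  proof (rule set_eqI, rule iffI)
    fix i assume "i \<in> {i. i < m + n \<and> P i}"
    then show "i \<in> {i. i < m \<and> P i} \<union> (\<lambda>j. m + j) ` {j. j < n \<and> P (m + j)}"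
      by (cases "i < m") (auto simp: image_iff intro!: exI[where x="i - m"])
  qed auto
  have "card ({i. i < m \<and> P i} \<union> (\<lambda>j. m + j) ` {j. j < n \<and> P (m + j)})
      = card {i. i < m \<and> P i} + card ((\<lambda>j. m + j) ` {j. j < n \<and> P (m + j)})"
    by (rule card_Un_disjoint) auto
  also have "card ((\<lambda>j. m + j) ` {j. j < n \<and> P (m + j)}) = card {j. j < n \<and> P (m + j)}"
    by (rule card_image) (simp add: inj_on_def)
  finally show ?thesis using e by simp
qed

lemma all_less_add: fixes m j :: nat shows "(\<forall>k<m+j. Q k) \<longleftrightarrow> (\<forall>k<m. Q k) \<and> (\<forall>k<j. Q (m+k))"
proof
  assume h: "(\<forall>k<m. Q k) \<and> (\<forall>k<j. Q (m+k))"
  show "\<forall>k<m+j. Q k"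
  proof (intro allI impI)
    fix k assume k: "k < m+j"
    show "Q k"
    proof (cases "k < m")
      case True with h show ?thesis by blast
    next
      case False then have "k = m + (k-m)" "k - m < j" using k by auto
      with h show ?thesis by metis
    qed
  qed
qed auto

lemma all_between_split:
  fixes m n i :: nat assumes i: "i < m"
  shows "(\<forall>k. i < k \<and> k < m + n \<longrightarrow> Q k) \<longleftrightarrow> (\<forall>k. i < k \<and> k < m \<longrightarrow> Q k) \<and> (\<forall>k<n. Q (m+k))"
proof
  assume h: "(\<forall>k. i < k \<and> k < m \<longrightarrow> Q k) \<and> (\<forall>k<n. Q (m+k))"
  show "\<forall>k. i < k \<and> k < m + n \<longrightarrow> Q k"
  proof (intro allI impI)
    fix k assume k: "i < k \<and> k < m + n"
    show "Q k"
    proof (cases "k < m")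
      case True with h k show ?thesis by blast
    next
      case False then have "k = m + (k-m)" "k - m < n" using k by auto
      with h show ?thesis by metis
    qed
  qed
next
  assume h: "\<forall>k. i < k \<and> k < m + n \<longrightarrow> Q k"
  show "(\<forall>k. i < k \<and> k < m \<longrightarrow> Q k) \<and> (\<forall>k<n. Q (m+k))"
    using h i by auto
qed

lemma all_between_shift:
  fixes m n i :: nat
  shows "(\<forall>k. m + i < k \<and> k < m + n \<longrightarrow> Q k) \<longleftrightarrow> (\<forall>k. i < k \<and> k < n \<longrightarrow> Q (m+k))"
proof
  assume h: "\<forall>k. i < k \<and> k < n \<longrightarrow> Q (m+k)"
  show "\<forall>k. m + i < k \<and> k < m + n \<longrightarrow> Q k"
  proof (intro allI impI)
    fix k assume k: "m + i < k \<and> k < m + n"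
    then have "k = m + (k-m)" "i < k - m" "k - m < n" by auto
    with h show "Q k" by metis
  qed
qed auto

lemma lmax_append:
  "lmax (xs @ ys) = lmax xs + card {j. j < length ys \<and> (\<forall>k<length xs. xs!k < ys!j) \<and> (\<forall>k<j. ys!k < ys!j)}"
proof -
  have "lmax (xs @ ys) = card {i. i < length xs + length ys \<and> (\<forall>j<i. (xs@ys)!j < (xs@ys)!i)}"
    unfolding lmax_def by simp
  also have "\<dots> = card {i. i < length xs \<and> (\<forall>j<i. (xs@ys)!j < (xs@ys)!i)}
     + card {j. j < length ys \<and> (\<forall>k<length xs + j. (xs@ys)!k < (xs@ys)!(length xs + j))}"
    by (rule card_split)
  also have "{i. i < length xs \<and> (\<forall>j<i. (xs@ys)!j < (xs@ys)!i)} = {i. i < length xs \<and> (\<forall>j<i. xs!j < xs!i)}"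
    by (auto simp: nth_append)
  also have "{j. j < length ys \<and> (\<forall>k<length xs + j. (xs@ys)!k < (xs@ys)!(length xs + j))}
     = {j. j < length ys \<and> (\<forall>k<length xs. xs!k < ys!j) \<and> (\<forall>k<j. ys!k < ys!j)}"
    by (simp only: all_less_add) (auto simp: nth_append)
  finally show ?thesis unfolding lmax_def by simp
qed

lemma lmin_append:
  "lmin (xs @ ys) = lmin xs + card {j. j < length ys \<and> (\<forall>k<length xs. xs!k > ys!j) \<and> (\<forall>k<j. ys!k > ys!j)}"
proof -
  have "lmin (xs @ ys) = card {i. i < length xs + length ys \<and> (\<forall>j<i. (xs@ys)!j > (xs@ys)!i)}"
    unfolding lmin_def by simp
  also have "\<dots> = card {i. i < length xs \<and> (\<forall>j<i. (xs@ys)!j > (xs@ys)!i)}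
     + card {j. j < length ys \<and> (\<forall>k<length xs + j. (xs@ys)!k > (xs@ys)!(length xs + j))}"
    by (rule card_split)
  also have "{i. i < length xs \<and> (\<forall>j<i. (xs@ys)!j > (xs@ys)!i)} = {i. i < length xs \<and> (\<forall>j<i. xs!j > xs!i)}"
    by (auto simp: nth_append)
  also have "{j. j < length ys \<and> (\<forall>k<length xs + j. (xs@ys)!k > (xs@ys)!(length xs + j))}
     = {j. j < length ys \<and> (\<forall>k<length xs. xs!k > ys!j) \<and> (\<forall>k<j. ys!k > ys!j)}"
    by (simp only: all_less_add) (auto simp: nth_append)
  finally show ?thesis unfolding lmin_def by simp
qed

lemma rmax_append:
  "rmax (xs @ ys) = card {i. i < length xs \<and> (\<forall>k<length ys. ys!k < xs!i) \<and> (\<forall>k. i < k \<and> k < length xs \<longrightarrow> xs!k < xs!i)} + rmax ys"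
proof -
  have "rmax (xs @ ys) = card {i. i < length xs + length ys \<and> (\<forall>j. i < j \<and> j < length xs + length ys \<longrightarrow> (xs@ys)!j < (xs@ys)!i)}"
    unfolding rmax_def by simp
  also have "\<dots> = card {i. i < length xs \<and> (\<forall>j. i < j \<and> j < length xs + length ys \<longrightarrow> (xs@ys)!j < (xs@ys)!i)}
     + card {j. j < length ys \<and> (\<forall>k. length xs + j < k \<and> k < length xs + length ys \<longrightarrow> (xs@ys)!k < (xs@ys)!(length xs + j))}"
    by (rule card_split)
  also have "{i. i < length xs \<and> (\<forall>j. i < j \<and> j < length xs + length ys \<longrightarrow> (xs@ys)!j < (xs@ys)!i)}
      = {i. i < length xs \<and> (\<forall>k<length ys. ys!k < xs!i) \<and> (\<forall>k. i < k \<and> k < length xs \<longrightarrow> xs!k < xs!i)}"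
  proof (rule Collect_cong)
    fix i show "(i < length xs \<and> (\<forall>j. i < j \<and> j < length xs + length ys \<longrightarrow> (xs@ys)!j < (xs@ys)!i)) =
      (i < length xs \<and> (\<forall>k<length ys. ys!k < xs!i) \<and> (\<forall>k. i < k \<and> k < length xs \<longrightarrow> xs!k < xs!i))"
      by (cases "i < length xs") (simp_all only: all_between_split, auto simp: nth_append)
  qed
  also have "{j. j < length ys \<and> (\<forall>k. length xs + j < k \<and> k < length xs + length ys \<longrightarrow> (xs@ys)!k < (xs@ys)!(length xs + j))}
     = {j. j < length ys \<and> (\<forall>k. j < k \<and> k < length ys \<longrightarrow> ys!k < ys!j)}"
    by (simp only: all_between_shift) (auto simp: nth_append)
  finally show ?thesis unfolding rmax_def by simp
qed

lemma rmin_append: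
  "rmin (xs @ ys) = card {i. i < length xs \<and> (\<forall>k<length ys. ys!k > xs!i) \<and> (\<forall>k. i < k \<and> k < length xs \<longrightarrow> xs!k > xs!i)} + rmin ys"
proof -
  have "rmin (xs @ ys) = card {i. i < length xs + length ys \<and> (\<forall>j. i < j \<and> j < length xs + length ys \<longrightarrow> (xs@ys)!j > (xs@ys)!i)}"
    unfolding rmin_def by simp
  also have "\<dots> = card {i. i < length xs \<and> (\<forall>j. i < j \<and> j < length xs + length ys \<longrightarrow> (xs@ys)!j > (xs@ys)!i)}
     + card {j. j < length ys \<and> (\<forall>k. length xs + j < k \<and> k < length xs + length ys \<longrightarrow> (xs@ys)!k > (xs@ys)!(length xs + j))}"
    by (rule card_split)
  also have "{i. i < length xs \<and> (\<forall>j. i < j \<and> j < length xs + length ys \<longrightarrow> (xs@ys)!j > (xs@ys)!i)}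
      = {i. i < length xs \<and> (\<forall>k<length ys. ys!k > xs!i) \<and> (\<forall>k. i < k \<and> k < length xs \<longrightarrow> xs!k > xs!i)}"
  proof (rule Collect_cong)
    fix i show "(i < length xs \<and> (\<forall>j. i < j \<and> j < length xs + length ys \<longrightarrow> (xs@ys)!j > (xs@ys)!i)) =
      (i < length xs \<and> (\<forall>k<length ys. ys!k > xs!i) \<and> (\<forall>k. i < k \<and> k < length xs \<longrightarrow> xs!k > xs!i))"
      by (cases "i < length xs") (simp_all only: all_between_split, auto simp: nth_append)
  qed
  also have "{j. j < length ys \<and> (\<forall>k. length xs + j < k \<and> k < length xs + length ys \<longrightarrow> (xs@ys)!k > (xs@ys)!(length xs + j))}
     = {j. j < length ys \<and> (\<forall>k. j < k \<and> k < length ys \<longrightarrow> ys!k > ys!j)}"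
    by (simp only: all_between_shift) (auto simp: nth_append)
  finally show ?thesis unfolding rmin_def by simp
qed


lemma adj_append:
  assumes "xs \<noteq> []" "ys \<noteq> []"
  shows "card {i. Suc i < length (xs @ ys) \<and> R ((xs@ys)!i) ((xs@ys)!Suc i)} =
    card {i. Suc i < length xs \<and> R (xs!i) (xs!Suc i)} + card {i. Suc i < length ys \<and> R (ys!i) (ys!Suc i)}
    + (if R (last xs) (hd ys) then 1 else 0)"
proof -
  define m where "m = length xs"
  define n where "n = length ys"
  have m1: "m \<ge> 1" "n \<ge> 1" using assms m_def n_def by (auto simp: Suc_le_eq)
  define Q where "Q i = R ((xs@ys)!i) ((xs@ys)!Suc i)" for i
  have "{i. Suc i < length (xs @ ys) \<and> R ((xs@ys)!i) ((xs@ys)!Suc i)} = {i. i < (m-1) + (1 + (n-1)) \<and> Q i}"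
    using m1 by (auto simp: m_def n_def Q_def)
  then have "card {i. Suc i < length (xs @ ys) \<and> R ((xs@ys)!i) ((xs@ys)!Suc i)}
     = card {i. i < m-1 \<and> Q i} + (card {j. j < 1 \<and> Q (m-1+j)} + card {j. j < n-1 \<and> Q (m-1+(1+j))})"
    by (simp only: card_split)
  also have "{i. i < m-1 \<and> Q i} = {i. Suc i < length xs \<and> R (xs!i) (xs!Suc i)}"
    using m1 by (auto simp: m_def Q_def nth_append)
  also have "{j. j < n-1 \<and> Q (m-1+(1+j))} = {i. Suc i < length ys \<and> R (ys!i) (ys!Suc i)}"
  proof (rule Collect_cong)
    fix j
    have "m-1+(1+j) = m + j" "Suc (m-1+(1+j)) = m + Suc j" using m1 by auto
    then show "(j < n-1 \<and> Q (m-1+(1+j))) = (Suc j < length ys \<and> R (ys!j) (ys!Suc j))"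
      unfolding Q_def using m1 by (auto simp: m_def n_def nth_append)
  qed
  also have "{j. j < 1 \<and> Q (m-1+j)} = (if R (last xs) (hd ys) then {0} else {})"
  proof -
    have "Q (m-1) = R (last xs) (hd ys)"
      using m1 assms unfolding Q_def m_def by (simp add: nth_append last_conv_nth hd_conv_nth)
    then show ?thesis by auto
  qed
  finally show ?thesis by simp
qed

lemma asc_append: "xs \<noteq> [] \<Longrightarrow> ys \<noteq> [] \<Longrightarrow>
  asc (xs @ ys) = asc xs + asc ys + (if last xs < hd ys then 1 else 0)"
  unfolding asc_def by (rule adj_append)

lemma des_append: "xs \<noteq> [] \<Longrightarrow> ys \<noteq> [] \<Longrightarrow>
  des (xs @ ys) = des xs + des ys + (if last xs > hd ys then 1 else 0)"
  unfolding des_def by (rule adj_append[where R="\<lambda>a b. b < a"])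

lemma shift_stats:
  "asc (map (\<lambda>j. j + c) a) = asc a" "des (map (\<lambda>j. j + c) a) = des a"
  "lmax (map (\<lambda>j. j + c) a) = lmax a" "lmin (map (\<lambda>j. j + c) a) = lmin a"
  "rmax (map (\<lambda>j. j + c) a) = rmax a" "rmin (map (\<lambda>j. j + c) a) = rmin a"
  unfolding asc_def des_def lmax_def lmin_def rmax_def rmin_def
  by (auto intro!: arg_cong[where f=card] Collect_cong)


lemma psum_stats:
  assumes a: "a \<in> perms m" and b: "b \<in> perms n" and ne: "a \<noteq> []" "b \<noteq> []"
  shows "asc (psum a b) = asc a + asc b + 1" "des (psum a b) = des a + des b"
    "lmax (psum a b) = lmax a + lmax b" "lmin (psum a b) = lmin a"
    "rmax (psum a b) = rmax b" "rmin (psum a b) = rmin a + rmin b"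
proof -
  have la: "length a = m" using a by (rule perms_length)
  have lb: "length b = n" using b by (rule perms_length)
  have A: "\<And>k. k < m \<Longrightarrow> 1 \<le> a!k \<and> a!k \<le> m" using perms_bounds[OF a] la by auto
  have B: "\<And>k. k < n \<Longrightarrow> 1 \<le> b!k \<and> b!k \<le> n" using perms_bounds[OF b] lb by auto
  have m0: "0 < m" "0 < n" using ne la lb by auto
  have ps: "psum a b = a @ map (\<lambda>j. j + m) b" using la by (simp add: psum_def)
  have lh: "last a < hd (map (\<lambda>j. j + m) b)"
    using A[of "m - 1"] B[of 0] m0 ne la by (simp add: last_conv_nth hd_conv_nth)
  show "asc (psum a b) = asc a + asc b + 1" "des (psum a b) = des a + des b"
    unfolding ps using lh ne by (simp_all add: asc_append des_append shift_stats)
  have "{j. j < length (map (\<lambda>j. j + m) b) \<and> (\<forall>k<length a. a!k < (map (\<lambda>j. j + m) b)!j) \<and>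
           (\<forall>k<j. (map (\<lambda>j. j + m) b)!k < (map (\<lambda>j. j + m) b)!j)}
      = {j. j < length b \<and> (\<forall>k<j. b!k < b!j)}"
    using A B la lb by (auto; fastforce)
  note s = this
  show "lmax (psum a b) = lmax a + lmax b" unfolding ps lmax_append s by (simp add: lmax_def)
  have "{j. j < length (map (\<lambda>j. j + m) b) \<and> (\<forall>k<length a. a!k > (map (\<lambda>j. j + m) b)!j) \<and>
           (\<forall>k<j. (map (\<lambda>j. j + m) b)!k > (map (\<lambda>j. j + m) b)!j)} = {}"
    using A[of 0] B la lb m0 by fastforce
  then show "lmin (psum a b) = lmin a" unfolding ps lmin_append by simp
  have "{i. i < length a \<and> (\<forall>k<length (map (\<lambda>j. j + m) b). (map (\<lambda>j. j + m) b)!k < a!i) \<and>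
           (\<forall>k. i < k \<and> k < length a \<longrightarrow> a!k < a!i)} = {}"
    using A B[of 0] la lb m0 by fastforce
  then show "rmax (psum a b) = rmax b" unfolding ps rmax_append by (simp add: shift_stats)
  have "{i. i < length a \<and> (\<forall>k<length (map (\<lambda>j. j + m) b). (map (\<lambda>j. j + m) b)!k > a!i) \<and>
           (\<forall>k. i < k \<and> k < length a \<longrightarrow> a!k > a!i)}
     = {i. i < length a \<and> (\<forall>k. i < k \<and> k < length a \<longrightarrow> a!k > a!i)}"
    using A B la lb by (auto; fastforce)
  note s = this
  show "rmin (psum a b) = rmin a + rmin b" unfolding ps rmin_append s by (simp add: rmin_def shift_stats[unfolded rmin_def])
qed

lemma pskew_stats:
  assumes a: "a \<in> perms m" and b: "b \<in> perms n" and ne: "a \<noteq> []" "b \<noteq> []"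
  shows "asc (pskew a b) = asc a + asc b" "des (pskew a b) = des a + des b + 1"
    "lmax (pskew a b) = lmax a" "lmin (pskew a b) = lmin a + lmin b"
    "rmax (pskew a b) = rmax a + rmax b" "rmin (pskew a b) = rmin b"
proof -
  have la: "length a = m" using a by (rule perms_length)
  have lb: "length b = n" using b by (rule perms_length)
  have A: "\<And>k. k < m \<Longrightarrow> 1 \<le> a!k \<and> a!k \<le> m" using perms_bounds[OF a] la by auto
  have B: "\<And>k. k < n \<Longrightarrow> 1 \<le> b!k \<and> b!k \<le> n" using perms_bounds[OF b] lb by auto
  have m0: "0 < m" "0 < n" using ne la lb by auto
  have ps: "pskew a b = map (\<lambda>j. j + n) a @ b" using lb by (simp add: pskew_def)
  have lh: "last (map (\<lambda>j. j + n) a) > hd b"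
    using A[of "m - 1"] B[of 0] m0 ne la by (simp add: last_conv_nth hd_conv_nth last_map)
  show "asc (pskew a b) = asc a + asc b" "des (pskew a b) = des a + des b + 1"
    unfolding ps using lh ne by (simp_all add: asc_append des_append shift_stats)
  have "{j. j < length b \<and> (\<forall>k<length (map (\<lambda>j. j + n) a). (map (\<lambda>j. j + n) a)!k < b!j) \<and>
           (\<forall>k<j. b!k < b!j)} = {}"
    using A[of 0] B la lb m0 by fastforce
  then show "lmax (pskew a b) = lmax a" unfolding ps lmax_append by (simp add: shift_stats)
  have "{j. j < length b \<and> (\<forall>k<length (map (\<lambda>j. j + n) a). (map (\<lambda>j. j + n) a)!k > b!j) \<and>
           (\<forall>k<j. b!k > b!j)} = {j. j < length b \<and> (\<forall>k<j. b!k > b!j)}"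
    using A B la lb by (auto; fastforce)
  note s = this
  show "lmin (pskew a b) = lmin a + lmin b" using shift_stats(4)[of n a] unfolding ps lmin_append s lmin_def[of b] by simp
  have "{i. i < length (map (\<lambda>j. j + n) a) \<and> (\<forall>k<length b. b!k < (map (\<lambda>j. j + n) a)!i) \<and>
           (\<forall>k. i < k \<and> k < length (map (\<lambda>j. j + n) a) \<longrightarrow> (map (\<lambda>j. j + n) a)!k < (map (\<lambda>j. j + n) a)!i)}
     = {i. i < length a \<and> (\<forall>k. i < k \<and> k < length a \<longrightarrow> a!k < a!i)}"
    using A B la lb by (auto; fastforce)
  note s = this
  show "rmax (pskew a b) = rmax a + rmax b" unfolding ps rmax_append s by (simp add: rmax_def)
  have "{i. i < length (map (\<lambda>j. j + n) a) \<and> (\<forall>k<length b. b!k > (map (\<lambda>j. j + n) a)!i) \<and>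
           (\<forall>k. i < k \<and> k < length (map (\<lambda>j. j + n) a) \<longrightarrow> (map (\<lambda>j. j + n) a)!k > (map (\<lambda>j. j + n) a)!i)} = {}"
    using A B[of 0] la lb m0 by fastforce
  then show "rmin (pskew a b) = rmin b" unfolding ps rmin_append by simp
qed


lemma wt_psum:
  assumes "a \<in> perms m" "b \<in> perms n" "a \<noteq> []" "b \<noteq> []"
  shows "wt p q x y u v (psum a b) = p * wt p q x 1 u v a * wt p q x y 1 v b"
  using psum_stats[OF assms] by (simp add: wt_def power_add mult_ac)

lemma wt_pskew:
  assumes "a \<in> perms m" "b \<in> perms n" "a \<noteq> []" "b \<noteq> []"
  shows "wt p q x y u v (pskew a b) = q * wt p q x y u 1 a * wt p q 1 y u v b"
  using pskew_stats[OF assms] by (simp add: wt_def power_add mult_ac)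

lemma wt_one: "wt p q x y u v [1] = x * y * u * v"
proof -
  have e: "{i. i < Suc 0 \<and> P i} = (if P 0 then {0} else {})" for P by auto
  have e2: "{i::nat. i = 0 \<and> P i} = (if P 0 then {0} else {})" for P by auto
  show ?thesis unfolding wt_def asc_def des_def lmax_def lmin_def rmax_def rmin_def
    by (simp add: e e2)
qed

definition "SP n = {\<pi>\<in>perms n. separable \<pi>}"
definition "IP n = {\<pi>\<in>perms n. separable \<pi> \<and> irreducible_perm \<pi>}"
definition "KP n = {\<pi>\<in>perms n. separable \<pi> \<and> (\<pi> = [1] \<or> \<not> irreducible_perm \<pi>)}"
definition "PA n = (\<Union>i\<le>n. SP i \<times> IP (n - i))"
definition "PB n = (\<Union>i\<le>n. KP i \<times> SP (n - i))"

lemma irr_one: "irreducible_perm [1]" unfolding irreducible_perm_def by simp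

lemma SP_small: "n < 2 \<Longrightarrow> SP n = (if n = 1 then {[1]} else {})"
proof -
  assume "n < 2"
  then have "n = 0 \<or> n = 1" by auto
  then show ?thesis
  proof
    assume "n = 0" then show ?thesis by (auto simp: SP_def perms_0 dest: separable_perm)
  next
    assume "n = 1" then show ?thesis using separable.one by (auto simp: SP_def perms_1')
  qed
qed

lemma IP_small: "n < 2 \<Longrightarrow> IP n = SP n"
  using SP_small[of n] irr_one unfolding SP_def IP_def by (auto split: if_splits)

lemma KP_sub: "KP n \<subseteq> SP n" "IP n \<subseteq> SP n" unfolding KP_def SP_def IP_def by auto

lemma SP0: "SP 0 = {}" using SP_small[of 0] by simp

lemma PA_small: "n < 2 \<Longrightarrow> PA n = {}"
proof -
  assume n: "n < 2"
  have "SP i \<times> IP (n - i) = {}" if "i \<le> n" for i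
  proof (cases "i = 0")
    case True then show ?thesis using SP0 by simp
  next
    case False then have "n - i = 0" using n that by auto
    then show ?thesis using IP_small[of 0] SP0 by simp
  qed
  then show ?thesis unfolding PA_def by auto
qed

lemma PB_small: "n < 2 \<Longrightarrow> PB n = {}"
proof -
  assume n: "n < 2"
  have "KP i \<times> SP (n - i) = {}" if "i \<le> n" for i
  proof (cases "i = 0")
    case True then show ?thesis using SP0 KP_sub(1)[of 0] by auto
  next
    case False then have "n - i = 0" using n that by auto
    then show ?thesis using SP0 by simp
  qed
  then show ?thesis unfolding PB_def by auto
qed

lemma SP_mem: "\<pi> \<in> SP n \<longleftrightarrow> separable \<pi> \<and> length \<pi> = n"
  unfolding SP_def using separable_perm perms_length by blast

lemma SP_diff_IP: "n \<ge> 2 \<Longrightarrow> SP n - IP n = (\<lambda>(a,b). psum a b) ` PA n"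
proof (rule set_eqI, rule iffI)
  fix \<pi> assume n: "n \<ge> 2" and pi: "\<pi> \<in> SP n - IP n"
  then have s: "separable \<pi>" "length \<pi> = n" "\<not> irreducible_perm \<pi>"
    unfolding SP_def IP_def using perms_length by auto
  have l2: "2 \<le> length \<pi>" using s n by simp
  from decomp[OF s(1) l2] show "\<pi> \<in> (\<lambda>(a,b). psum a b) ` PA n"
  proof
    assume "\<exists>a b. separable a \<and> separable b \<and> irreducible_perm b \<and> \<pi> = psum a b"
    then obtain a b where ab: "separable a" "separable b" "irreducible_perm b" "\<pi> = psum a b" by blast
    then have "(a, b) \<in> SP (length a) \<times> IP (n - length a)" "length a \<le> n"
      using s separable_perm[OF ab(2)] unfolding IP_def by (auto simp: psum_def SP_mem)
    then show ?thesis unfolding PA_def using ab(4) by (auto intro!: image_eqI[where x="(a,b)"])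
  next
    assume "\<exists>a b. separable a \<and> separable b \<and> (a = [1] \<or> \<not> irreducible_perm a) \<and> \<pi> = pskew a b"
    then show ?thesis using s sep_pskew_irr by blast
  qed
next
  fix \<pi> assume n: "n \<ge> 2" and pi: "\<pi> \<in> (\<lambda>(a,b). psum a b) ` PA n"
  then obtain a b i where i: "i \<le> n" "a \<in> SP i" "b \<in> IP (n - i)" "\<pi> = psum a b"
    unfolding PA_def by auto
  then have "separable a" "separable b" "length a = i" "length b = n - i"
    unfolding SP_mem IP_def using perms_length by auto
  then show "\<pi> \<in> SP n - IP n" using i sep_psum_red separable.dsum
    unfolding IP_def by (auto simp: psum_def SP_mem)
qed

lemma IP_eq: "n \<ge> 2 \<Longrightarrow> IP n = (\<lambda>(a,b). pskew a b) ` PB n"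
proof (rule set_eqI, rule iffI)
  fix \<pi> assume n: "n \<ge> 2" and pi: "\<pi> \<in> IP n"
  then have s: "separable \<pi>" "length \<pi> = n" "irreducible_perm \<pi>"
    unfolding IP_def using perms_length by auto
  have l2: "2 \<le> length \<pi>" using s n by simp
  from decomp[OF s(1) l2] show "\<pi> \<in> (\<lambda>(a,b). pskew a b) ` PB n"
  proof
    assume "\<exists>a b. separable a \<and> separable b \<and> irreducible_perm b \<and> \<pi> = psum a b"
    then show ?thesis using s sep_psum_red by blast
  next
    assume "\<exists>a b. separable a \<and> separable b \<and> (a = [1] \<or> \<not> irreducible_perm a) \<and> \<pi> = pskew a b"
    then obtain a b where ab: "separable a" "separable b" "a = [1] \<or> \<not> irreducible_perm a" "\<pi> = pskew a b" by blast
    then have "(a, b) \<in> KP (length a) \<times> SP (n - length a)" "length a \<le> n"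
      using s separable_perm[OF ab(1)] unfolding KP_def by (auto simp: pskew_def SP_mem)
    then show ?thesis unfolding PB_def using ab(4) by (auto intro!: image_eqI[where x="(a,b)"])
  qed
next
  fix \<pi> assume n: "n \<ge> 2" and pi: "\<pi> \<in> (\<lambda>(a,b). pskew a b) ` PB n"
  then obtain a b i where i: "i \<le> n" "a \<in> KP i" "b \<in> SP (n - i)" "\<pi> = pskew a b"
    unfolding PB_def by auto
  then have "separable a" "separable b" "length a = i" "length b = n - i"
    unfolding SP_mem KP_def using perms_length by auto
  then show "\<pi> \<in> IP n" using i sep_pskew_irr separable.skew separable_perm
    unfolding IP_def by (metis (no_types, lifting) le_add_diff_inverse length_append length_map mem_Collect_eq pskew_def)
qed


lemma inj_shift: "inj (\<lambda>j::nat. j + c)" by (simp add: inj_on_def)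

lemma psum_inj_aux:
  assumes "(a,b) \<in> PA n" "(a',b') \<in> PA n" "psum a b = psum a' b'"
  shows "a = a' \<and> b = b'"
proof -
  obtain i where i: "i \<le> n" "a \<in> perms i" "b \<in> perms (n - i)" "irreducible_perm b" "separable a" "separable b"
    using assms(1) unfolding PA_def SP_def IP_def by auto
  obtain i' where i': "i' \<le> n" "a' \<in> perms i'" "b' \<in> perms (n - i')" "irreducible_perm b'" "separable a'" "separable b'"
    using assms(2) unfolding PA_def SP_def IP_def by auto
  have nb: "b \<noteq> []" "b' \<noteq> []" using i(6) i'(6) separable_perm by auto
  show ?thesis
  proof (cases i i' rule: linorder_cases)
    case less
    from psum_uniq_aux[OF i(2) i'(2) less i'(3) nb(2) assms(3)] i(4) show ?thesis by simp
  next
    case greater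
    from psum_uniq_aux[OF i'(2) i(2) greater i(3) nb(1) assms(3)[symmetric]] i'(4) show ?thesis by simp
  next
    case equal
    have la: "length a = i" "length a' = i'" using i(2) i'(2) perms_length by auto
    then have "a @ map (\<lambda>j. j + i) b = a' @ map (\<lambda>j. j + i) b'" using assms(3) equal by (simp add: psum_def)
    then have "a = a' \<and> map (\<lambda>j. j + i) b = map (\<lambda>j. j + i) b'" using la equal
      by (simp add: append_eq_append_conv)
    then show ?thesis using inj_shift by auto
  qed
qed

lemma pskew_inj_aux:
  assumes "(a,b) \<in> PB n" "(a',b') \<in> PB n" "pskew a b = pskew a' b'"
  shows "a = a' \<and> b = b'"
proof -
  obtain i where i: "i \<le> n" "a \<in> perms i" "b \<in> perms (n - i)" "a = [1] \<or> \<not> irreducible_perm a" "separable a" "separable b"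
    using assms(1) unfolding PB_def SP_def KP_def by auto
  obtain i' where i': "i' \<le> n" "a' \<in> perms i'" "b' \<in> perms (n - i')" "a' = [1] \<or> \<not> irreducible_perm a'" "separable a'" "separable b'"
    using assms(2) unfolding PB_def SP_def KP_def by auto
  have na: "a \<noteq> []" "a' \<noteq> []" using i(5) i'(5) separable_perm by auto
  have la: "length a = i" "length a' = i'" "length b = n - i" "length b' = n - i'"
    using i i' perms_length by auto
  show ?thesis
  proof (cases i i' rule: linorder_cases)
    case less
    from pskew_uniq_aux[OF i(2) i(3) i'(2) i'(3) na(1) less assms(3)] i'(4) have "a' = [1]" by auto
    then have "i' = 1" using la by auto
    then show ?thesis using less la na by auto
  next
    case greater
    from pskew_uniq_aux[OF i'(2) i'(3) i(2) i(3) na(2) greater assms(3)[symmetric]] i(4) have "a = [1]" by auto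
    then have "i = 1" using la by auto
    then show ?thesis using greater la na by auto
  next
    case equal
    then have "map (\<lambda>j. j + (n - i)) a @ b = map (\<lambda>j. j + (n - i)) a' @ b'" using assms(3) la
      by (simp add: pskew_def)
    then have "map (\<lambda>j. j + (n - i)) a = map (\<lambda>j. j + (n - i)) a' \<and> b = b'" using la equal
      by (simp add: append_eq_append_conv)
    then show ?thesis using inj_shift by auto
  qed
qed

lemma inj_PA: "inj_on (\<lambda>(a,b). psum a b) (PA n)"
  unfolding inj_on_def using psum_inj_aux by fast

lemma inj_PB: "inj_on (\<lambda>(a,b). pskew a b) (PB n)"
  unfolding inj_on_def using pskew_inj_aux by fast

lemma coeff_prod:
  fixes f :: "'b \<Rightarrow> 'a::comm_ring_1" and g :: "'c \<Rightarrow> 'a"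
  assumes fa: "\<And>i. finite (A i)" and fb: "\<And>i. finite (B i)" and d: "\<And>i j. i \<noteq> j \<Longrightarrow> A i \<inter> A j = {}"
  shows "fps_nth (Abs_fps (\<lambda>n. \<Sum>a\<in>A n. f a) * Abs_fps (\<lambda>n. \<Sum>b\<in>B n. g b)) n
       = (\<Sum>(a,b)\<in>(\<Union>i\<le>n. A i \<times> B (n - i)). f a * g b)"
proof -
  have "fps_nth (Abs_fps (\<lambda>n. \<Sum>a\<in>A n. f a) * Abs_fps (\<lambda>n. \<Sum>b\<in>B n. g b)) n
      = (\<Sum>i\<in>{..n}. (\<Sum>a\<in>A i. f a) * (\<Sum>b\<in>B (n - i). g b))"
    by (simp add: fps_mult_nth atLeast0AtMost)
  also have "\<dots> = (\<Sum>i\<in>{..n}. \<Sum>(a,b)\<in>A i \<times> B (n - i). f a * g b)"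
    by (intro sum.cong refl) (simp add: sum_product sum.cartesian_product[symmetric])
  also have "\<dots> = (\<Sum>(a,b)\<in>(\<Union>i\<le>n. A i \<times> B (n - i)). f a * g b)"
    by (rule sum.UNION_disjoint[symmetric]) (use fa fb d in blast)+
  finally show ?thesis .
qed

lemma finite_SP: "finite (SP n)" "finite (IP n)" "finite (KP n)"
  unfolding SP_def IP_def KP_def using finite_perms by auto

lemma disj_SP: "i \<noteq> j \<Longrightarrow> SP i \<inter> SP j = {}" "i \<noteq> j \<Longrightarrow> KP i \<inter> KP j = {}"
  unfolding SP_def KP_def using perms_length by blast+

lemma Sgf_SP: "Sgf p q x y u v = Abs_fps (\<lambda>n. \<Sum>\<pi>\<in>SP n. wt p q x y u v \<pi>)"
  unfolding Sgf_def SP_def by simp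

lemma Igf_IP: "Igf p q x y u v = Abs_fps (\<lambda>n. \<Sum>\<pi>\<in>IP n. wt p q x y u v \<pi>)"
  unfolding Igf_def IP_def by simp

lemma K_fps:
  fixes p q x y u :: "'a::comm_ring_1"
  shows "Sgf p q x y u 1 - Igf p q x y u 1 + fps_const (x*y*u) * fps_X
       = Abs_fps (\<lambda>n. \<Sum>\<pi>\<in>KP n. wt p q x y u 1 \<pi>)"
proof (rule fps_ext)
  fix n
  have "fps_nth (Sgf p q x y u 1 - Igf p q x y u 1 + fps_const (x*y*u) * fps_X) n
     = (\<Sum>\<pi>\<in>SP n - IP n. wt p q x y u 1 \<pi>) + (if n = 1 then x*y*u else 0)"
    by (simp add: Sgf_SP Igf_IP sum_diff finite_SP KP_sub)
  also have "\<dots> = (\<Sum>\<pi>\<in>KP n. wt p q x y u 1 \<pi>)"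
  proof (cases "n = 1")
    case True
    then have "SP n - IP n = {}" using IP_small[of 1] by simp
    then have z: "(\<Sum>\<pi>\<in>SP n - IP n. wt p q x y u 1 \<pi>) = 0" by (simp only: sum.empty)
    moreover have "KP n = {[1]}" using True separable.one irr_one
      by (auto simp: KP_def perms_1')
    ultimately show ?thesis using True wt_one[of p q x y u 1] by (simp only: z) simp
  next
    case False
    then have "KP n = SP n - IP n" unfolding KP_def SP_def IP_def using perms_1 perms_length
      by fastforce
    then show ?thesis using False by simp
  qed
  finally show "fps_nth (Sgf p q x y u 1 - Igf p q x y u 1 + fps_const (x*y*u) * fps_X) n
     = fps_nth (Abs_fps (\<lambda>n. \<Sum>\<pi>\<in>KP n. wt p q x y u 1 \<pi>)) n" by simp
qed


lemma SI_coeff: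
  fixes p q x y u v :: "'a::comm_ring_1"
  shows "fps_nth (Sgf p q x 1 u v * Igf p q x y 1 v) n
    = (\<Sum>(a,b)\<in>PA n. wt p q x 1 u v a * wt p q x y 1 v b)"
  unfolding Sgf_SP Igf_IP PA_def
  by (rule coeff_prod) (auto simp: finite_SP disj_SP)

lemma KS_coeff:
  fixes p q x y u v :: "'a::comm_ring_1"
  shows "fps_nth ((Sgf p q x y u 1 - Igf p q x y u 1 + fps_const (x*y*u) * fps_X) * Sgf p q 1 y u v) n
    = (\<Sum>(a,b)\<in>PB n. wt p q x y u 1 a * wt p q 1 y u v b)"
  unfolding K_fps unfolding Sgf_SP PB_def
  by (rule coeff_prod) (auto simp: finite_SP disj_SP)

lemma PB_mem: "(a,b) \<in> PB n \<Longrightarrow> \<exists>i j. a \<in> perms i \<and> b \<in> perms j \<and> a \<noteq> [] \<and> b \<noteq> []"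
  unfolding PB_def KP_def SP_def using separable_perm by blast

lemma PA_mem: "(a,b) \<in> PA n \<Longrightarrow> \<exists>i j. a \<in> perms i \<and> b \<in> perms j \<and> a \<noteq> [] \<and> b \<noteq> []"
  unfolding PA_def IP_def SP_def using separable_perm by blast

lemma I_coeff:
  fixes p q x y u v :: "'a::comm_ring_1"
  shows "(\<Sum>\<pi>\<in>IP n. wt p q x y u v \<pi>) = (if n = 1 then x*y*u*v else 0)
     + q * (\<Sum>(a,b)\<in>PB n. wt p q x y u 1 a * wt p q 1 y u v b)"
proof (cases "n < 2")
  case True
  then have "IP n = (if n = 1 then {[1]} else {})" using IP_small SP_small by simp
  then show ?thesis using True PB_small[OF True] wt_one[of p q x y u v] by auto
next
  case False
  then have "(\<Sum>\<pi>\<in>IP n. wt p q x y u v \<pi>) = (\<Sum>ab\<in>PB n. wt p q x y u v ((\<lambda>(a,b). pskew a b) ab))"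
    using IP_eq[of n] inj_PB[of n] by (simp add: sum.reindex)
  also have "\<dots> = (\<Sum>(a,b)\<in>PB n. q * (wt p q x y u 1 a * wt p q 1 y u v b))"
    by (rule sum.cong) (auto dest!: PB_mem simp: wt_pskew mult.assoc)
  also have "\<dots> = q * (\<Sum>(a,b)\<in>PB n. wt p q x y u 1 a * wt p q 1 y u v b)"
    by (simp add: sum_distrib_left case_prod_unfold)
  finally show ?thesis using False by simp
qed

lemma D_coeff:
  fixes p q x y u v :: "'a::comm_ring_1"
  shows "(\<Sum>\<pi>\<in>SP n - IP n. wt p q x y u v \<pi>) = p * (\<Sum>(a,b)\<in>PA n. wt p q x 1 u v a * wt p q x y 1 v b)"
proof (cases "n < 2")
  case True
  then have "SP n - IP n = {}" using IP_small by simp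
  then have z: "(\<Sum>\<pi>\<in>SP n - IP n. wt p q x y u v \<pi>) = 0" by (simp only: sum.empty)
  then show ?thesis using PA_small[OF True] by (simp only: z) simp
next
  case False
  then have "(\<Sum>\<pi>\<in>SP n - IP n. wt p q x y u v \<pi>) = (\<Sum>ab\<in>PA n. wt p q x y u v ((\<lambda>(a,b). psum a b) ab))"
    using SP_diff_IP[of n] inj_PA[of n] by (simp add: sum.reindex)
  also have "\<dots> = (\<Sum>(a,b)\<in>PA n. p * (wt p q x 1 u v a * wt p q x y 1 v b))"
    by (rule sum.cong) (auto dest!: PA_mem simp: wt_psum mult.assoc)
  also have "\<dots> = p * (\<Sum>(a,b)\<in>PA n. wt p q x 1 u v a * wt p q x y 1 v b)"
    by (simp add: sum_distrib_left case_prod_unfold)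
  finally show ?thesis .
qed

lemma const3_nth: fixes c :: "'a::comm_ring_1" shows "fps_nth (fps_const c * F * G) n = c * fps_nth (F * G) n"
  by (simp only: mult.assoc fps_mult_left_const_nth)

theorem theorem3:
  fixes p q x y u v :: "'a::comm_ring_1"
  shows "(Sgf p q x y u v =
           fps_const (x*y*u*v) * fps_X
         + fps_const p * Sgf p q x 1 u v * Igf p q x y 1 v
         + fps_const q * (Sgf p q x y u 1 - Igf p q x y u 1 + fps_const (x*y*u) * fps_X)
             * Sgf p q 1 y u v)
       \<and> Igf p q x y u v =
           fps_const (x*y*u*v) * fps_X
         + fps_const q * (Sgf p q x y u 1 - Igf p q x y u 1 + fps_const (x*y*u) * fps_X)
             * Sgf p q 1 y u v"
proof
  show I: "Igf p q x y u v =
           fps_const (x*y*u*v) * fps_X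
         + fps_const q * (Sgf p q x y u 1 - Igf p q x y u 1 + fps_const (x*y*u) * fps_X)
             * Sgf p q 1 y u v"
  proof (rule fps_ext)
    fix n
    show "fps_nth (Igf p q x y u v) n = fps_nth (fps_const (x*y*u*v) * fps_X
         + fps_const q * (Sgf p q x y u 1 - Igf p q x y u 1 + fps_const (x*y*u) * fps_X)
             * Sgf p q 1 y u v) n"
      by (simp only: const3_nth fps_add_nth fps_mult_left_const_nth KS_coeff fps_X_nth)
         (simp add: Igf_IP I_coeff)
  qed
  show "Sgf p q x y u v =
           fps_const (x*y*u*v) * fps_X
         + fps_const p * Sgf p q x 1 u v * Igf p q x y 1 v
         + fps_const q * (Sgf p q x y u 1 - Igf p q x y u 1 + fps_const (x*y*u) * fps_X)
             * Sgf p q 1 y u v"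
  proof (rule fps_ext)
    fix n
    have "fps_nth (Sgf p q x y u v) n = (\<Sum>\<pi>\<in>IP n. wt p q x y u v \<pi>) + (\<Sum>\<pi>\<in>SP n - IP n. wt p q x y u v \<pi>)"
      by (simp add: Sgf_SP sum_diff finite_SP KP_sub)
    then show "fps_nth (Sgf p q x y u v) n = fps_nth (fps_const (x*y*u*v) * fps_X
         + fps_const p * Sgf p q x 1 u v * Igf p q x y 1 v
         + fps_const q * (Sgf p q x y u 1 - Igf p q x y u 1 + fps_const (x*y*u) * fps_X)
             * Sgf p q 1 y u v) n"
      by (simp only: const3_nth fps_add_nth fps_mult_left_const_nth KS_coeff SI_coeff fps_X_nth)
         (simp add: I_coeff D_coeff algebra_simps)
  qed
qed

end
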